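(* For every integer $r\ge 2$ the following hold: (a) every point of $R_r$ lies above $\ell_{r-1}$; (b) every point of $L_r$ lies below $\ell_{r-1}'$; (c) no point of $L_{r-1}$ lies below $\ell_{r-1}$; (d) no point of $L_{r-1}'$ lies below $\ell_{r-1}'$; (e) no point of $R_{r-1}$ lies above $\ell_{r-1}$; (f) no point of $R_{r-1}'$ lies above $\ell_{r-1}'$.
   Context: Define finite sets $P_r\subset\mathbb{Z}^2$ for integers $r\ge 0$ recursively: $P_0:=\{(0,0)\}$; for $r\ge 1$, $L_r:=P_{r-1}$, $R_r:=\{(x+\delta_r,\,y+\delta_r'):(x,y)\in L_r\}$ and $P_r:=L_r\cup R_r$, where $\delta_r:=3\cdot 4^{r-1}$ and $\delta_r':=(3r+1)\cdot 4^{r-1}$. For $r\ge 1$, let $\ell_r$ be the straight line through the rightmost point (largest $x$-coordinate) of $L_r$ and the leftmost point (smallest $x$-coordinate) of $R_r$. For $r\ge 2$, $R_r$ is the translate of $P_{r-1}=L_{r-1}\cup R_{r-1}$ by the vector $(\delta_r,\delta_r')$; let $L_{r-1}'$, $R_{r-1}'$ and $\ell_{r-1}'$ denote the translates of $L_{r-1}$, $R_{r-1}$ and of the line $\ell_{r-1}$, respectively, by $(\delta_r,\delta_r')$ (so $R_r=L_{r-1}'\cup R_{r-1}'$). *)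

theory Defs
  imports Main Complex_Main
begin

type_synonym pt = "int \<times> int"

definition delta :: "nat \<Rightarrow> int" where
  "delta r = 3 * 4 ^ (r - 1)"

definition delta' :: "nat \<Rightarrow> int" where
  "delta' r = (3 * int r + 1) * 4 ^ (r - 1)"

definition shift :: "pt \<Rightarrow> pt \<Rightarrow> pt" where
  "shift v p = (fst p + fst v, snd p + snd v)"

definition vec :: "nat \<Rightarrow> pt" where
  "vec r = (delta r, delta' r)"

fun P :: "nat \<Rightarrow> pt set" where
  "P 0 = {(0, 0)}"
| "P (Suc r) = P r \<union> shift (vec (Suc r)) ` P r"

definition L :: "nat \<Rightarrow> pt set" where
  "L r = P (r - 1)"

definition R :: "nat \<Rightarrow> pt set" where
  "R r = shift (vec r) ` L r"

definition rightmost :: "pt set \<Rightarrow> pt" where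
  "rightmost A = (ARG_MAX fst p. p \<in> A)"

definition leftmost :: "pt set \<Rightarrow> pt" where
  "leftmost A = (ARG_MIN fst p. p \<in> A)"

text \<open>A (non-vertical) line is represented by two points on it.\<close>
type_synonym line = "pt \<times> pt"

definition line_at :: "line \<Rightarrow> real \<Rightarrow> real" where
  "line_at l x = (let (a, b) = l in
     real_of_int (snd a) + real_of_int (snd b - snd a) / real_of_int (fst b - fst a) * (x - real_of_int (fst a)))"

definition above :: "pt \<Rightarrow> line \<Rightarrow> bool" where
  "above p l \<longleftrightarrow> real_of_int (snd p) > line_at l (real_of_int (fst p))"

definition below :: "pt \<Rightarrow> line \<Rightarrow> bool" where
  "below p l \<longleftrightarrow> real_of_int (snd p) < line_at l (real_of_int (fst p))"

definition ell :: "nat \<Rightarrow> line" where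
  "ell r = (rightmost (L r), leftmost (R r))"

definition L' :: "nat \<Rightarrow> pt set" where
  "L' r = shift (vec r) ` L (r - 1)"

definition R' :: "nat \<Rightarrow> pt set" where
  "R' r = shift (vec r) ` R (r - 1)"

definition ell' :: "nat \<Rightarrow> line" where
  "ell' r = (shift (vec r) (fst (ell (r - 1))), shift (vec r) (snd (ell (r - 1))))"

end

theory Submission
  imports Defs
begin

definition top :: "nat \<Rightarrow> pt" where
  "top k = (4 ^ k - 1, int k * 4 ^ k)"

lemma vec_Suc: "vec (Suc k) = (3 * 4 ^ k, (3 * int k + 4) * 4 ^ k)"
  by (simp add: vec_def delta_def delta'_def algebra_simps)

lemma shift_simps[simp]: "fst (shift v p) = fst p + fst v" "snd (shift v p) = snd p + snd v"
  by (simp_all add: shift_def)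

lemma top_in: "top k \<in> P k"
proof (induction k)
  case 0 then show ?case by (simp add: top_def)
next
  case (Suc k)
  have "top (Suc k) = shift (vec (Suc k)) (top k)"
    by (simp add: top_def shift_def vec_Suc algebra_simps)
  with Suc show ?case by simp
qed

lemma zero_in: "(0,0) \<in> P k"
  by (induction k) auto

lemma Pfacts: "p \<in> P k \<Longrightarrow> 0 \<le> fst p \<and> fst p \<le> 4^k-1 \<and> (fst p = 0 \<longrightarrow> p=(0,0)) \<and> (fst p = 4^k-1 \<longrightarrow> p = top k)"
proof (induction k arbitrary: p)
  case 0 then show ?case by (simp add: top_def)
next
  case (Suc k)
  have pos: "(0::int) < 4^k" by simp
  from Suc.prems consider "p \<in> P k" | q where "q \<in> P k" "p = shift (vec (Suc k)) q" by auto
  then show ?case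
  proof cases
    case 1
    from Suc.IH[OF 1] pos show ?thesis by auto
  next
    case 2
    from Suc.IH[OF 2(1)] pos have h: "0 \<le> fst q" "fst q \<le> 4^k-1" "fst q = 4^k-1 \<longrightarrow> q = top k" by auto
    have "top (Suc k) = shift (vec (Suc k)) (top k)"
      by (simp add: top_def shift_def vec_Suc algebra_simps)
    with h pos 2(2) show ?thesis by (auto simp: vec_Suc)
  qed
qed

definition g :: "real \<Rightarrow> pt \<Rightarrow> real" where
  "g s p = real_of_int (snd p) - s * real_of_int (fst p)"

lemma g_shift: "g s (shift v p) = g s p + g s v"
  by (simp add: g_def algebra_simps)

lemma gbounds: "3*s \<ge> 3 * real k + 1 \<Longrightarrow> p \<in> P k \<Longrightarrow> g s p \<le> 0 \<and> g s (top k) \<le> g s p"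
proof (induction k arbitrary: p)
  case 0 then show ?case by (simp add: top_def g_def)
next
  case (Suc k)
  have gv: "g s (vec (Suc k)) \<le> 0"
  proof -
    have "g s (vec (Suc k)) = (3 * real k + 4 - 3 * s) * 4^k"
      by (simp add: g_def vec_Suc algebra_simps)
    also have "\<dots> \<le> 0" using Suc.prems(1) by (intro mult_nonpos_nonneg) auto
    finally show ?thesis .
  qed
  have tS: "top (Suc k) = shift (vec (Suc k)) (top k)"
    by (simp add: top_def shift_def vec_Suc algebra_simps)
  have IH: "\<And>q. q \<in> P k \<Longrightarrow> g s q \<le> 0 \<and> g s (top k) \<le> g s q"
    using Suc.IH Suc.prems(1) by auto
  from Suc.prems(2) consider "p \<in> P k" | q where "q \<in> P k" "p = shift (vec (Suc k)) q" by auto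
  then show ?case
  proof cases
    case 1 with IH[OF 1] gv tS show ?thesis by (simp add: g_shift)
  next
    case 2 with IH[OF 2(1)] gv tS show ?thesis by (simp add: g_shift)
  qed
qed

lemma rightmost_P: "rightmost (P k) = top k"
proof -
  have "is_arg_max fst (\<lambda>p. p \<in> P k) x \<longleftrightarrow> x = top k" for x
  proof
    assume a: "is_arg_max fst (\<lambda>p. p \<in> P k) x"
    then have "x \<in> P k" "\<forall>y. y \<in> P k \<longrightarrow> fst y \<le> fst x" by (auto simp: is_arg_max_linorder)
    then have "x \<in> P k" "fst (top k) \<le> fst x" using top_in by blast+
    then show "x = top k" using Pfacts[of x k] by (auto simp: top_def)
  next
    assume "x = top k"
    then show "is_arg_max fst (\<lambda>p. p \<in> P k) x" using top_in Pfacts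
      by (auto simp: is_arg_max_linorder top_def)
  qed
  then show ?thesis by (simp add: rightmost_def arg_max_def)
qed

lemma leftmost_P: "leftmost (shift v ` P k) = v"
proof -
  have "is_arg_min fst (\<lambda>p. p \<in> shift v ` P k) x \<longleftrightarrow> x = v" for x
  proof
    assume a: "is_arg_min fst (\<lambda>p. p \<in> shift v ` P k) x"
    then obtain q where q: "q \<in> P k" "x = shift v q" by (auto simp: is_arg_min_linorder)
    have "shift v (0,0) \<in> shift v ` P k" using zero_in by blast
    with a q have "fst x \<le> fst (shift v (0,0))" unfolding is_arg_min_linorder by blast
    with q have "fst q \<le> 0" by simp
    then have "q = (0,0)" using Pfacts[OF q(1)] by auto
    then show "x = v" using q by (simp add: shift_def)
  next
    assume "x = v"
    moreover have "shift v (0,0) = v" by (simp add: shift_def)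
    moreover have "\<forall>y. y \<in> shift v ` P k \<longrightarrow> fst v \<le> fst y"
      using Pfacts by fastforce
    ultimately show "is_arg_min fst (\<lambda>p. p \<in> shift v ` P k) x" using zero_in
      unfolding is_arg_min_linorder by (metis image_eqI)
  qed
  then show ?thesis by (simp add: leftmost_def arg_min_def)
qed

definition slope :: "pt \<Rightarrow> pt \<Rightarrow> real" where
  "slope a b = real_of_int (snd b - snd a) / real_of_int (fst b - fst a)"

lemma line_slope: "line_at (a,b) x = real_of_int (snd a) + slope a b * (x - real_of_int (fst a))"
  by (simp add: line_at_def slope_def)

lemma above_g: "above p (a,b) \<longleftrightarrow> g (slope a b) p > g (slope a b) a"
  by (simp add: above_def line_slope g_def algebra_simps)

lemma below_g: "below p (a,b) \<longleftrightarrow> g (slope a b) p < g (slope a b) a"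
  by (simp add: below_def line_slope g_def algebra_simps)

lemma slope_shift: "slope (shift v a) (shift v b) = slope a b"
  by (simp add: slope_def)

lemma g_line: "fst a \<noteq> fst b \<Longrightarrow> g (slope a b) b = g (slope a b) a"
  by (simp add: g_def slope_def field_simps)

lemma pow4: "real n + 1 \<le> 4 ^ n"
  by (induction n) auto

theorem lemma3:
  fixes r :: nat
  assumes "r \<ge> 2"
  shows "(\<forall>p\<in>R r. above p (ell (r - 1)))
       \<and> (\<forall>p\<in>L r. below p (ell' r))
       \<and> (\<forall>p\<in>L (r - 1). \<not> below p (ell (r - 1)))
       \<and> (\<forall>p\<in>L' r. \<not> below p (ell' r))
       \<and> (\<forall>p\<in>R (r - 1). \<not> above p (ell (r - 1)))
       \<and> (\<forall>p\<in>R' r. \<not> above p (ell' r))"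
proof -
  obtain n where rn: "r = Suc (Suc n)" using assms by (metis add_2_eq_Suc le_Suc_ex)
  define a where "a = top n"
  define b where "b = vec (Suc n)"
  define v where "v = vec (Suc (Suc n))"
  define s where "s = slope a b"
  define A where "A = g s a"
  have e1: "ell (r - 1) = (a, b)"
    by (simp add: rn ell_def L_def R_def rightmost_P leftmost_P a_def b_def)
  have e2: "ell' r = (shift v a, shift v b)"
    using e1 by (simp add: ell'_def v_def rn)
  have LR: "L r = P (Suc n)" "R r = shift v ` P (Suc n)" "L (r - 1) = P n"
    "R (r - 1) = shift b ` P n" "L' r = shift v ` P n" "R' r = shift v ` shift b ` P n"
    by (simp_all add: rn L_def R_def L'_def R'_def v_def b_def)
  define q :: real where "q = 4 ^ n"
  have q1: "real n + 1 \<le> q" using pow4 q_def by simp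
  have ab: "a = (4^n - 1, int n * 4^n)" "b = (3 * 4 ^ n, (3 * int n + 4) * 4 ^ n)"
    "v = (3 * 4 ^ Suc n, (3 * int (Suc n) + 4) * 4 ^ Suc n)"
    by (simp_all add: a_def top_def b_def v_def vec_Suc)
  have sq: "s * (2*q+1) = (2 * real n + 4) * q"
  proof -
    have "s = (2 * real n + 4) * q / (2*q+1)"
      by (simp add: s_def slope_def ab q_def algebra_simps)
    moreover have "2*q+1 > 0" using q1 by simp
    ultimately show ?thesis by simp
  qed
  have C1: "3 * s \<ge> 3 * real n + 1"
  proof -
    have "(3 * real n + 1) * (2*q+1) \<le> 3 * s * (2*q+1)" using sq q1 by (simp add: algebra_simps)
    moreover have "2*q+1 > 0" using q1 by simp
    ultimately show ?thesis by simp
  qed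
  have gb: "g s b = A" unfolding A_def s_def
  proof (rule g_line)
    have h: "(0::int) < 4^n" by simp
    have "fst b - fst a = 2 * 4^n + 1" unfolding ab by simp
    with h show "fst a \<noteq> fst b" by linarith
  qed
  have gbq: "g s b = (3 * real n + 4) * q - 3 * s * q"
    by (simp add: g_def ab q_def algebra_simps)
  have gvq: "g s v = 4 * ((3 * real n + 7) * q - 3 * s * q)"
    by (simp add: g_def ab q_def algebra_simps)
  have sl: "s < real n + 2"
  proof -
    have "s * (2*q+1) < (real n + 2) * (2*q+1)" using sq q1 by (simp add: algebra_simps)
    moreover have "2*q+1 > 0" using q1 by simp
    ultimately show ?thesis by (meson mult_less_cancel_right_pos)
  qed
  have C2: "g s v + A > 0"
  proof -
    have "g s v + A = q * (15 * real n + 32 - 15 * s)" using gvq gbq gb by (simp add: algebra_simps)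
    moreover have "q > 0" using q1 by simp
    moreover have "15 * real n + 32 - 15 * s > 0" using sl by simp
    ultimately show ?thesis by simp
  qed
  have Pn: "\<And>p. p \<in> P n \<Longrightarrow> g s p \<le> 0 \<and> A \<le> g s p"
    using gbounds[OF C1] by (simp add: A_def a_def)
  have A0: "A \<le> 0" using Pn[OF top_in] by (simp add: A_def a_def)
  have PSn: "\<And>p. p \<in> P (Suc n) \<Longrightarrow> g s p \<le> 0 \<and> 2 * A \<le> g s p"
  proof -
    fix p assume "p \<in> P (Suc n)"
    then consider "p \<in> P n" | p' where "p' \<in> P n" "p = shift b p'" by (auto simp: b_def)
    then show "g s p \<le> 0 \<and> 2 * A \<le> g s p"
    proof cases
      case 1 then show ?thesis using Pn A0 by fastforce
    next
      case 2 then show ?thesis using Pn[OF 2(1)] A0 gb by (simp add: g_shift)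
    qed
  qed
  have sv: "slope (shift v a) (shift v b) = s" by (simp add: slope_shift s_def)
  have ga: "g s a = A" by (simp add: A_def)
  have c1: "\<forall>p\<in>shift v ` P (Suc n). g s a < g s p"
  proof
    fix p assume "p \<in> shift v ` P (Suc n)"
    then obtain p' where "p' \<in> P (Suc n)" "p = shift v p'" by blast
    then show "g s a < g s p" using PSn[of p'] C2 ga by (simp add: g_shift)
  qed
  have c2: "\<forall>p\<in>P (Suc n). g s p < g s (shift v a)"
  proof
    fix p assume "p \<in> P (Suc n)"
    then show "g s p < g s (shift v a)" using PSn[of p] C2 ga by (simp add: g_shift)
  qed
  have c3: "\<forall>p\<in>P n. \<not> g s p < g s a" using Pn ga by force
  have c4: "\<forall>p\<in>shift v ` P n. \<not> g s p < g s (shift v a)"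
  proof
    fix p assume "p \<in> shift v ` P n"
    then obtain p' where "p' \<in> P n" "p = shift v p'" by blast
    then show "\<not> g s p < g s (shift v a)" using Pn[of p'] ga by (simp add: g_shift)
  qed
  have c5: "\<forall>p\<in>shift b ` P n. \<not> g s a < g s p"
  proof
    fix p assume "p \<in> shift b ` P n"
    then obtain p' where "p' \<in> P n" "p = shift b p'" by blast
    then show "\<not> g s a < g s p" using Pn[of p'] ga gb by (simp add: g_shift)
  qed
  have c6: "\<forall>p\<in>shift v ` shift b ` P n. \<not> g s (shift v a) < g s p"
  proof
    fix p assume "p \<in> shift v ` shift b ` P n"
    then obtain p' where "p' \<in> P n" "p = shift v (shift b p')" by blast
    then show "\<not> g s (shift v a) < g s p" using Pn[of p'] ga gb by (simp add: g_shift)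
  qed
  show ?thesis
    unfolding e1 e2 LR above_g below_g sv s_def[symmetric]
    using c1 c2 c3 c4 c5 c6 by blast
qed

end
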